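(* Up to isomorphism, there are exactly five Frobenius objects in $\mathbf{Rel}$ whose underlying set has two elements. Writing the set as $X=\{a,b\}$, they are (pairwise non-isomorphic): (1) $\eta=\{a\}$, $\varepsilon=\{a\}$, $\tilde\mu(a,a)=\{a\}$, $\tilde\mu(a,b)=\tilde\mu(b,a)=\{b\}$, $\tilde\mu(b,b)=\{a\}$; (2) $\eta=\{a\}$, $\varepsilon=\{a\}$, $\tilde\mu(a,a)=\{a\}$, $\tilde\mu(a,b)=\tilde\mu(b,a)=\{b\}$, $\tilde\mu(b,b)=\{a,b\}$; (3) $\eta=\{a\}$, $\varepsilon=\{b\}$, $\tilde\mu(a,a)=\{a\}$, $\tilde\mu(a,b)=\tilde\mu(b,a)=\{b\}$, $\tilde\mu(b,b)=\{a\}$; (4) $\eta=\{a\}$, $\varepsilon=\{b\}$, $\tilde\mu(a,a)=\{a\}$, $\tilde\mu(a,b)=\tilde\mu(b,a)=\{b\}$, $\tilde\mu(b,b)=\emptyset$; (5) $\eta=\{a,b\}$, $\varepsilon=\{a,b\}$, $\tilde\mu(a,a)=\{a\}$, $\tilde\mu(b,b)=\{b\}$, $\tilde\mu(a,b)=\tilde\mu(b,a)=\emptyset$.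
   Context: $\mathbf{Rel}$ is the monoidal category whose objects are sets, morphisms $X\to Y$ are relations $R\subseteq X\times Y$, composition is $S\circ R=\{(x,z):\exists y,(x,y)\in R,(y,z)\in S\}$, identities are diagonals, the monoidal product is the Cartesian product and the unit is $\{\bullet\}$. A relation $R\subseteq X\times Y$ is identified with $\tilde R:X\to\mathcal{P}(Y)$, $\tilde R(x)=\{y:(x,y)\in R\}$. A Frobenius object in $\mathbf{Rel}$ is a set $X$ with unit $\eta\subseteq X$ (relation $\{\bullet\}\to X$), counit $\varepsilon\subseteq X$ (relation $X\to\{\bullet\}$) and multiplication $\mu\subseteq X\times X\times X$ (relation $X\times X\to X$, described by $\tilde\mu:X\times X\to\mathcal{P}(X)$) satisfying unitality $\mu\circ(\mathbf{1}\times\eta)=\mu\circ(\eta\times\mathbf{1})=\mathbf{1}$, associativity $\mu\circ(\mathbf{1}\times\mu)=\mu\circ(\mu\times\mathbf{1})$, and nondegeneracy: there exists a relation $\beta:\{\bullet\}\to X\times X$ with $(\varepsilon\times\mathbf{1})\circ(\mu\times\mathbf{1})\circ(\mathbf{1}\times\beta)=(\mathbf{1}\times\varepsilon)\circ(\mathbf{1}\times\mu)\circ(\beta\times\mathbf{1})=\mathbf{1}$. An isomorphism between Frobenius objects $(X,\eta,\varepsilon,\tilde\mu)$ and $(X',\eta',\varepsilon',\tilde\mu')$ is a bijection $f:X\to X'$ with $f(\eta)=\eta'$, $f(\varepsilon)=\varepsilon'$ and $\tilde\mu'(f(x),f(y))=f(\tilde\mu(x,y))$ for all $x,y\in X$.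 *)

theory Defs
  imports Main
begin

text \<open>
  A Frobenius object in Rel on a set X is given by
    eta \<subseteq> X  (the unit relation {*} -> X),
    eps \<subseteq> X  (the counit relation X -> {*}),
    mu :: 'a => 'a => 'a set  (the multiplication X x X -> X, written as the map mu-tilde
                               into the power set; only its values on X x X matter).
  The axioms below are the equations of relations in Rel written out element-wise
  (composition of relations, identity = diagonal, Cartesian product of relations,
  with the canonical unitors/associators of (Rel, x, {*})).
\<close>

definition frobenius_rel :: "'a set \<Rightarrow> 'a set \<Rightarrow> 'a set \<Rightarrow> ('a \<Rightarrow> 'a \<Rightarrow> 'a set) \<Rightarrow> bool" where
  "frobenius_rel X \<eta> \<epsilon> \<mu> \<longleftrightarrow>
     \<comment> \<open>well-formedness: eta, eps, mu are relations on X\<close>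
     \<eta> \<subseteq> X \<and> \<epsilon> \<subseteq> X \<and> (\<forall>x\<in>X. \<forall>y\<in>X. \<mu> x y \<subseteq> X) \<and>
     \<comment> \<open>unitality: mu o (1 x eta) = 1\<close>
     (\<forall>x\<in>X. \<forall>z\<in>X. (\<exists>e\<in>\<eta>. z \<in> \<mu> x e) \<longleftrightarrow> z = x) \<and>
     \<comment> \<open>unitality: mu o (eta x 1) = 1\<close>
     (\<forall>x\<in>X. \<forall>z\<in>X. (\<exists>e\<in>\<eta>. z \<in> \<mu> e x) \<longleftrightarrow> z = x) \<and>
     \<comment> \<open>associativity: mu o (1 x mu) = mu o (mu x 1)\<close>
     (\<forall>x\<in>X. \<forall>y\<in>X. \<forall>z\<in>X. \<forall>w\<in>X.
        (\<exists>v\<in>X. v \<in> \<mu> y z \<and> w \<in> \<mu> x v) \<longleftrightarrow> (\<exists>u\<in>X. u \<in> \<mu> x y \<and> w \<in> \<mu> u z)) \<and>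
     \<comment> \<open>nondegeneracy: some beta : {*} -> X x X satisfies the two snake equations\<close>
     (\<exists>\<beta>. \<beta> \<subseteq> X \<times> X \<and>
        \<comment> \<open>(eps x 1) o (mu x 1) o (1 x beta) = 1\<close>
        (\<forall>x\<in>X. \<forall>z\<in>X. (\<exists>y\<in>X. (y, z) \<in> \<beta> \<and> (\<exists>w\<in>\<epsilon>. w \<in> \<mu> x y)) \<longleftrightarrow> x = z) \<and>
        \<comment> \<open>(1 x eps) o (1 x mu) o (beta x 1) = 1\<close>
        (\<forall>x\<in>X. \<forall>y\<in>X. (\<exists>z\<in>X. (y, z) \<in> \<beta> \<and> (\<exists>w\<in>\<epsilon>. w \<in> \<mu> z x)) \<longleftrightarrow> x = y))"

definition frob_iso ::
  "'a set \<Rightarrow> 'a set \<Rightarrow> 'a set \<Rightarrow> ('a \<Rightarrow> 'a \<Rightarrow> 'a set) \<Rightarrow>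
   'b set \<Rightarrow> 'b set \<Rightarrow> 'b set \<Rightarrow> ('b \<Rightarrow> 'b \<Rightarrow> 'b set) \<Rightarrow> bool" where
  "frob_iso X \<eta> \<epsilon> \<mu> X' \<eta>' \<epsilon>' \<mu>' \<longleftrightarrow>
     (\<exists>f. bij_betw f X X' \<and> f ` \<eta> = \<eta>' \<and> f ` \<epsilon> = \<epsilon>' \<and>
          (\<forall>x\<in>X. \<forall>y\<in>X. \<mu>' (f x) (f y) = f ` (\<mu> x y)))"

fun model_eta :: "nat \<Rightarrow> 'a \<Rightarrow> 'a \<Rightarrow> 'a set" where
  "model_eta i a b = (if i = 5 then {a, b} else {a})"

fun model_eps :: "nat \<Rightarrow> 'a \<Rightarrow> 'a \<Rightarrow> 'a set" where
  "model_eps i a b = (if i = 1 \<or> i = 2 then {a} else if i = 3 \<or> i = 4 then {b} else {a, b})"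

fun model_mu :: "nat \<Rightarrow> 'a \<Rightarrow> 'a \<Rightarrow> 'a \<Rightarrow> 'a \<Rightarrow> 'a set" where
  "model_mu i a b x y =
     (if x = a \<and> y = a then {a}
      else if (x = a \<and> y = b) \<or> (x = b \<and> y = a) then (if i = 5 then {} else {b})
      else if x = b \<and> y = b then
        (if i = 1 \<or> i = 3 then {a} else if i = 2 then {a, b} else if i = 4 then {} else {b})
      else {})"

end

theory Submission
  imports Defs
begin

lemma mm:
  assumes "(a::'a) \<noteq> b"
  shows "model_mu i a b a a = {a}"
    "model_mu i a b a b = (if i = 5 then {} else {b})"
    "model_mu i a b b a = (if i = 5 then {} else {b})"
    "model_mu i a b b b = (if i = 1 \<or> i = 3 then {a} else if i = 2 then {a, b} else if i = 4 then {} else {b})"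
  using assms by auto
declare model_mu.simps[simp del]

definition conf :: "nat \<Rightarrow> 'b \<Rightarrow> 'b \<Rightarrow> 'b set \<Rightarrow> 'b set \<Rightarrow> ('b \<Rightarrow> 'b \<Rightarrow> 'b set) \<Rightarrow> bool" where
  "conf i c d \<eta> \<epsilon> \<mu> \<longleftrightarrow> \<eta> = model_eta i c d \<and> \<epsilon> = model_eps i c d \<and>
     \<mu> c c = model_mu i c d c c \<and> \<mu> c d = model_mu i c d c d \<and>
     \<mu> d c = model_mu i c d d c \<and> \<mu> d d = model_mu i c d d d"

lemma bex_sub: "S \<subseteq> {c,d} \<Longrightarrow> (\<exists>e\<in>S. P e) = ((c \<in> S \<and> P c) \<or> (d \<in> S \<and> P d))"
  by blast

lemma set_eq2: "S \<subseteq> {c,d} \<Longrightarrow> T \<subseteq> {c,d} \<Longrightarrow> (S = T) = ((c \<in> S \<longleftrightarrow> c \<in> T) \<and> (d \<in> S \<longleftrightarrow> d \<in> T))"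
  by blast

lemma classify:
  assumes cd: "c \<noteq> d" and F: "frobenius_rel {c,d} \<eta> \<epsilon> \<mu>"
  shows "conf 1 c d \<eta> \<epsilon> \<mu> \<or> conf 1 d c \<eta> \<epsilon> \<mu> \<or> conf 2 c d \<eta> \<epsilon> \<mu> \<or> conf 2 d c \<eta> \<epsilon> \<mu> \<or>
         conf 3 c d \<eta> \<epsilon> \<mu> \<or> conf 3 d c \<eta> \<epsilon> \<mu> \<or> conf 4 c d \<eta> \<epsilon> \<mu> \<or> conf 4 d c \<eta> \<epsilon> \<mu> \<or>
         conf 5 c d \<eta> \<epsilon> \<mu>"
proof -
  have s: "\<eta> \<subseteq> {c,d}" "\<epsilon> \<subseteq> {c,d}" "\<mu> c c \<subseteq> {c,d}" "\<mu> c d \<subseteq> {c,d}" "\<mu> d c \<subseteq> {c,d}" "\<mu> d d \<subseteq> {c,d}"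
    using F unfolding frobenius_rel_def by simp_all
  note Fd = F[unfolded frobenius_rel_def]
  have U1: "\<forall>x\<in>{c,d}. \<forall>z\<in>{c,d}. (\<exists>e\<in>\<eta>. z \<in> \<mu> x e) \<longleftrightarrow> z = x"
    using Fd by (elim conjE) assumption
  have U2: "\<forall>x\<in>{c,d}. \<forall>z\<in>{c,d}. (\<exists>e\<in>\<eta>. z \<in> \<mu> e x) \<longleftrightarrow> z = x"
    using Fd by (elim conjE) assumption
  have A: "\<forall>x\<in>{c,d}. \<forall>y\<in>{c,d}. \<forall>z\<in>{c,d}. \<forall>w\<in>{c,d}.
        (\<exists>v\<in>{c,d}. v \<in> \<mu> y z \<and> w \<in> \<mu> x v) \<longleftrightarrow> (\<exists>u\<in>{c,d}. u \<in> \<mu> x y \<and> w \<in> \<mu> u z)"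
    using Fd by (elim conjE) assumption
  have "\<exists>\<beta>. \<beta> \<subseteq> {c,d} \<times> {c,d} \<and> (\<forall>x\<in>{c,d}. \<forall>z\<in>{c,d}. (\<exists>y\<in>{c,d}. (y, z) \<in> \<beta> \<and> (\<exists>w\<in>\<epsilon>. w \<in> \<mu> x y)) \<longleftrightarrow> x = z) \<and>
        (\<forall>x\<in>{c,d}. \<forall>y\<in>{c,d}. (\<exists>z\<in>{c,d}. (y, z) \<in> \<beta> \<and> (\<exists>w\<in>\<epsilon>. w \<in> \<mu> z x)) \<longleftrightarrow> x = y)"
    using Fd by (elim conjE) assumption
  then obtain \<beta> where B: "\<forall>x\<in>{c,d}. \<forall>z\<in>{c,d}. (\<exists>y\<in>{c,d}. (y, z) \<in> \<beta> \<and> (\<exists>w\<in>\<epsilon>. w \<in> \<mu> x y)) \<longleftrightarrow> x = z"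
        "\<forall>x\<in>{c,d}. \<forall>y\<in>{c,d}. (\<exists>z\<in>{c,d}. (y, z) \<in> \<beta> \<and> (\<exists>w\<in>\<epsilon>. w \<in> \<mu> z x)) \<longleftrightarrow> x = y"
    by (elim exE conjE) (rule that)
  show ?thesis
    using U1 U2 A B cd s
    apply (simp add: bex_sub[OF s(1)] bex_sub[OF s(2)] conf_def set_eq2 mm cd cd[symmetric])
    apply sat done
qed

lemma frob1: "(a::'a) \<noteq> b \<Longrightarrow> frobenius_rel {a, b} (model_eta 1 a b) (model_eps 1 a b) (model_mu 1 a b)"
  unfolding frobenius_rel_def
  by (intro conjI exI[of _ "{(a,a),(b,b)}"]) (simp_all add: mm)

lemma frob2: "(a::'a) \<noteq> b \<Longrightarrow> frobenius_rel {a, b} (model_eta 2 a b) (model_eps 2 a b) (model_mu 2 a b)"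
  unfolding frobenius_rel_def
  by (intro conjI exI[of _ "{(a,a),(b,b)}"]) (simp_all add: mm)

lemma frob3: "(a::'a) \<noteq> b \<Longrightarrow> frobenius_rel {a, b} (model_eta 3 a b) (model_eps 3 a b) (model_mu 3 a b)"
  unfolding frobenius_rel_def
  by (intro conjI exI[of _ "{(a,b),(b,a)}"]) (simp_all add: mm)

lemma frob4: "(a::'a) \<noteq> b \<Longrightarrow> frobenius_rel {a, b} (model_eta 4 a b) (model_eps 4 a b) (model_mu 4 a b)"
  unfolding frobenius_rel_def
  by (intro conjI exI[of _ "{(a,b),(b,a)}"]) (simp_all add: mm)

lemma frob5: "(a::'a) \<noteq> b \<Longrightarrow> frobenius_rel {a, b} (model_eta 5 a b) (model_eps 5 a b) (model_mu 5 a b)"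
  unfolding frobenius_rel_def
  by (intro conjI exI[of _ "{(a,a),(b,b)}"]) (simp_all add: mm)

lemma part1:
  fixes a b :: 'a
  assumes "a \<noteq> b" and "i \<in> {1..5::nat}"
  shows "frobenius_rel {a, b} (model_eta i a b) (model_eps i a b) (model_mu i a b)"
proof -
  have "i = 1 \<or> i = 2 \<or> i = 3 \<or> i = 4 \<or> i = 5" using assms(2) by auto
  then show ?thesis using frob1[OF assms(1)] frob2[OF assms(1)] frob3[OF assms(1)] frob4[OF assms(1)] frob5[OF assms(1)]
    by (elim disjE) (simp_all only:)
qed

lemma bij2:
  assumes "a \<noteq> b" "bij_betw f {a, b} {a, b}"
  shows "(f a = a \<and> f b = b) \<or> (f a = b \<and> f b = a)"
proof -
  have "f a \<in> {a,b}" "f b \<in> {a,b}" using bij_betw_apply[OF assms(2)] by simp_all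
  moreover have "f a \<noteq> f b" using assms(1) inj_onD[OF bij_betw_imp_inj_on[OF assms(2)], of a b] by blast
  ultimately show ?thesis by auto
qed

lemma part2:
  fixes a b :: 'a
  assumes "a \<noteq> b" and "i \<in> {1..5::nat}" and "j \<in> {1..5::nat}" and "i \<noteq> j"
  shows "\<not> frob_iso {a, b} (model_eta i a b) (model_eps i a b) (model_mu i a b)
                   {a, b} (model_eta j a b) (model_eps j a b) (model_mu j a b)"
proof
  assume "frob_iso {a, b} (model_eta i a b) (model_eps i a b) (model_mu i a b)
                   {a, b} (model_eta j a b) (model_eps j a b) (model_mu j a b)"
  then obtain f where f: "bij_betw f {a,b} {a,b}"
    "f ` model_eta i a b = model_eta j a b" "f ` model_eps i a b = model_eps j a b"
    "\<forall>x\<in>{a,b}. \<forall>y\<in>{a,b}. model_mu j a b (f x) (f y) = f ` (model_mu i a b x y)"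
    using \<open>frob_iso {a, b} (model_eta i a b) (model_eps i a b) (model_mu i a b)
                   {a, b} (model_eta j a b) (model_eps j a b) (model_mu j a b)\<close>
    unfolding frob_iso_def by (elim exE conjE) (rule that; assumption)
  have m: "model_mu j a b (f b) (f b) = f ` (model_mu i a b b b)"
          "model_mu j a b (f a) (f b) = f ` (model_mu i a b a b)"
    by (rule f(4)[rule_format]; simp)+
  have ij: "i = 1 \<or> i = 2 \<or> i = 3 \<or> i = 4 \<or> i = 5" "j = 1 \<or> j = 2 \<or> j = 3 \<or> j = 4 \<or> j = 5"
    using assms(2,3) by auto
  from bij2[OF assms(1) f(1)] show False
  proof
    assume h: "f a = a \<and> f b = b"
    show False using ij assms(1,4) f(2,3) m h by (elim disjE; simp add: doubleton_eq_iff mm)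
  next
    assume h: "f a = b \<and> f b = a"
    show False using ij assms(1,4) f(2,3) m h by (elim disjE; simp add: doubleton_eq_iff mm) 
  qed
qed

lemma iso_core:
  fixes a b :: 'a and c d :: 'b
  assumes cd: "c \<noteq> d" and ab: "a \<noteq> b" and fc: "f c = a" "f d = b" and ii: "i = 1 \<or> i = 2 \<or> i = 3 \<or> i = 4 \<or> i = (5::nat)"
  and C': "\<mu> c c = model_mu i c d c c" "\<mu> c d = model_mu i c d c d"
     "\<mu> d c = model_mu i c d d c" "\<mu> d d = model_mu i c d d d"
  shows "f ` model_eta i c d = model_eta i a b \<and> f ` model_eps i c d = model_eps i a b \<and>
      (\<forall>x\<in>{c,d}. \<forall>y\<in>{c,d}. model_mu i a b (f x) (f y) = f ` (\<mu> x y))"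
  using ii by (elim disjE; simp add: C' mm cd ab fc)

lemma iso_bij:
  fixes a b :: 'a and c d :: 'b
  assumes cd: "c \<noteq> d" and ab: "a \<noteq> b"
  shows "bij_betw (\<lambda>x. if x = c then a else b) {c,d} {a,b}"
  using cd ab unfolding bij_betw_def inj_on_def by auto

lemma iso:
  fixes a b :: 'a and c d :: 'b
  assumes cd: "c \<noteq> d" and ab: "a \<noteq> b" and i: "i \<in> {1..5::nat}" and C: "conf i c d \<eta> \<epsilon> \<mu>"
  shows "frob_iso {c,d} \<eta> \<epsilon> \<mu> {a, b} (model_eta i a b) (model_eps i a b) (model_mu i a b)"
proof -
  have fc: "(\<lambda>x. if x = c then a else b) c = a" "(\<lambda>x. if x = c then a else b) d = b" using cd by auto
  have ii: "i = 1 \<or> i = 2 \<or> i = 3 \<or> i = 4 \<or> i = 5" using i by auto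
  have C': "\<eta> = model_eta i c d" "\<epsilon> = model_eps i c d"
     "\<mu> c c = model_mu i c d c c" "\<mu> c d = model_mu i c d c d"
     "\<mu> d c = model_mu i c d d c" "\<mu> d d = model_mu i c d d d"
    using C unfolding conf_def by simp_all
  note core = iso_core[OF cd ab fc ii C'(3-6)]
  show ?thesis unfolding frob_iso_def C'(1,2)
    by (rule exI[where x="\<lambda>x. if x = c then a else b"], rule conjI[OF iso_bij[OF cd ab] core])
qed

lemma part3:
  fixes a b :: 'a and X :: "'b set"
  assumes ab: "a \<noteq> b" and X: "card X = 2" and F: "frobenius_rel X \<eta> \<epsilon> \<mu>"
  shows "\<exists>i\<in>{1..5::nat}. frob_iso X \<eta> \<epsilon> \<mu> {a, b} (model_eta i a b) (model_eps i a b) (model_mu i a b)"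
proof -
  obtain c d where Xe: "X = {c,d}" and cd: "c \<noteq> d" using X[unfolded card_2_iff] by blast
  have Xe': "X = {d,c}" using Xe by blast
  have F1: "frobenius_rel {c,d} \<eta> \<epsilon> \<mu>" using F Xe by simp
  have I1: "frob_iso X \<eta> \<epsilon> \<mu> {a, b} (model_eta i a b) (model_eps i a b) (model_mu i a b)"
    if "i \<in> {1..5::nat}" "conf i c d \<eta> \<epsilon> \<mu>" for i
    unfolding Xe by (rule iso[OF cd ab that])
  have I2: "frob_iso X \<eta> \<epsilon> \<mu> {a, b} (model_eta i a b) (model_eps i a b) (model_mu i a b)"
    if "i \<in> {1..5::nat}" "conf i d c \<eta> \<epsilon> \<mu>" for i
    unfolding Xe' by (rule iso[OF cd[symmetric] ab that])
  have r: "(1::nat) \<in> {1..5}" "(2::nat) \<in> {1..5}" "(3::nat) \<in> {1..5}" "(4::nat) \<in> {1..5}" "(5::nat) \<in> {1..5}" by auto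
  from classify[OF cd F1] show ?thesis
    apply (elim disjE)
            apply (rule bexI[where x=1], erule I1[OF r(1)], rule r(1))
            apply (rule bexI[where x=1], erule I2[OF r(1)], rule r(1))
            apply (rule bexI[where x=2], erule I1[OF r(2)], rule r(2))
            apply (rule bexI[where x=2], erule I2[OF r(2)], rule r(2))
            apply (rule bexI[where x=3], erule I1[OF r(3)], rule r(3))
            apply (rule bexI[where x=3], erule I2[OF r(3)], rule r(3))
            apply (rule bexI[where x=4], erule I1[OF r(4)], rule r(4))
            apply (rule bexI[where x=4], erule I2[OF r(4)], rule r(4))
    apply (rule bexI[where x=5], erule I1[OF r(5)], rule r(5))
    done
qed

theorem theorem5p1:
  fixes a b :: 'a
  assumes "a \<noteq> b"
  shows
    "(\<forall>i\<in>{1..5::nat}. frobenius_rel {a, b} (model_eta i a b) (model_eps i a b) (model_mu i a b)) \<and>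
     (\<forall>i\<in>{1..5::nat}. \<forall>j\<in>{1..5::nat}. i \<noteq> j \<longrightarrow>
        \<not> frob_iso {a, b} (model_eta i a b) (model_eps i a b) (model_mu i a b)
                   {a, b} (model_eta j a b) (model_eps j a b) (model_mu j a b)) \<and>
     (\<forall>(X :: 'b set) \<eta> \<epsilon> \<mu>. card X = 2 \<and> frobenius_rel X \<eta> \<epsilon> \<mu> \<longrightarrow>
        (\<exists>i\<in>{1..5::nat}. frob_iso X \<eta> \<epsilon> \<mu> {a, b} (model_eta i a b) (model_eps i a b) (model_mu i a b)))"
  apply (intro conjI ballI allI impI)
    apply (erule part1[OF assms])
   apply (erule (2) part2[OF assms])
  apply (erule conjE)
  apply (erule (1) part3[OF assms])
  done

end
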